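(* Let $\mathcal G\subseteq\mathsf P^n$ be the gauge group of an $n$-qubit subsystem code, with stabilizer group $\mathcal S=\mathcal G^\perp\cap\mathcal G$, dressed logical operators $\mathcal S^\perp$, and distance $d$, the minimal weight of an element of $\mathcal S^\perp\setminus\mathcal G$. Let $\Gamma\subseteq 2^{[n]}$ with $|\gamma|\le\lfloor\frac{d-1}{2}\rfloor$ for all $\gamma\in\Gamma$, and let $P=\mathop{\ast}_{\gamma\in\Gamma}P_\gamma$ where each $P_\gamma$ is a probability distribution on $\mathsf P^n$ supported on Paulis with support in $\gamma$ and with $P_\gamma(I)>\tfrac12$. Then the logical channel $P_L(e)=\frac1{|\mathcal G|}\sum_{g\in\mathcal G}P(eg)$ is uniquely determined by the stabilizer measurement statistics $E(s)=\sum_{e\in\mathsf P^n}\langle s,e\rangle P(e)$, $s\in\mathcal S$ (among all channels of this form with the same $\Gamma$).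
   Context: $\mathsf P^n$ is the $n$-qubit Pauli group modulo phases; $\langle a,e\rangle=+1$ if $a,e$ commute and $-1$ otherwise; $B^\perp=\{a:\langle a,b\rangle=1\ \forall b\in B\}$. A subsystem code is specified by an arbitrary subgroup $\mathcal G\subseteq\mathsf P^n$ (not necessarily with $\mathcal G\subseteq\mathcal G^\perp$). Weight and support of a Pauli: number/set of qubits on which it acts nontrivially. Phenomenological noise: in each round an independent error $e\sim P$ occurs and the measurement of $s\in\mathcal S$ yields $\langle s,e\rangle$. Convolution: $(f\ast g)(e)=\sum_{e'}f(e')g(ee')$. *)

theory Defs
  imports Complex_Main "HOL-Library.Extended_Nat" "HOL-Library.FuncSet"
begin

text \<open>An n-qubit Pauli modulo phases: on qubit i, the pair (x_i, z_i) of bits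
  (I = (F,F), X = (T,F), Z = (F,T), Y = (T,T)); qubits i >= n carry I.\<close>
type_synonym pauli = "nat \<Rightarrow> bool \<times> bool"

definition pI :: pauli where "pI = (\<lambda>i. (False, False))"

definition paulis :: "nat \<Rightarrow> pauli set" where
  "paulis n = {a. \<forall>i\<ge>n. a i = (False, False)}"

definition pmult :: "pauli \<Rightarrow> pauli \<Rightarrow> pauli" where
  "pmult a b = (\<lambda>i. (fst (a i) \<noteq> fst (b i), snd (a i) \<noteq> snd (b i)))"

text \<open>Product of a finite family of Paulis (the group is abelian mod phases).\<close>
definition pprod :: "'i set \<Rightarrow> ('i \<Rightarrow> pauli) \<Rightarrow> pauli" where
  "pprod A f = (\<lambda>i. (odd (card {k\<in>A. fst (f k i)}), odd (card {k\<in>A. snd (f k i)})))"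

definition psupp :: "pauli \<Rightarrow> nat set" where
  "psupp a = {i. a i \<noteq> (False, False)}"

definition pweight :: "pauli \<Rightarrow> nat" where
  "pweight a = card (psupp a)"

definition comm :: "nat \<Rightarrow> pauli \<Rightarrow> pauli \<Rightarrow> real" where
  "comm n a e = (if even (card {i. i < n \<and> ((fst (a i) \<and> snd (e i)) \<noteq> (snd (a i) \<and> fst (e i)))})
                 then 1 else -1)"

definition perp :: "nat \<Rightarrow> pauli set \<Rightarrow> pauli set" where
  "perp n B = {a \<in> paulis n. \<forall>b\<in>B. comm n a b = 1}"

definition pauli_subgroup :: "nat \<Rightarrow> pauli set \<Rightarrow> bool" where
  "pauli_subgroup n G \<longleftrightarrow> G \<subseteq> paulis n \<and> pI \<in> G \<and> (\<forall>a\<in>G. \<forall>b\<in>G. pmult a b \<in> G)"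

definition stabilizer :: "nat \<Rightarrow> pauli set \<Rightarrow> pauli set" where
  "stabilizer n G = perp n G \<inter> G"

definition dressed :: "nat \<Rightarrow> pauli set \<Rightarrow> pauli set" where
  "dressed n G = perp n (stabilizer n G)"

text \<open>Distance: minimal weight of an element of S^perp - G (infinite if that set is empty).\<close>
definition code_distance :: "nat \<Rightarrow> pauli set \<Rightarrow> enat" where
  "code_distance n G = (INF a \<in> dressed n G - G. enat (pweight a))"

definition prob_dist :: "nat \<Rightarrow> (pauli \<Rightarrow> real) \<Rightarrow> bool" where
  "prob_dist n p \<longleftrightarrow> (\<forall>e. p e \<ge> 0) \<and> (\<forall>e. e \<notin> paulis n \<longrightarrow> p e = 0)
                      \<and> (\<Sum>e\<in>paulis n. p e) = 1"

text \<open>Convolution of the finite family (Q gamma)_{gamma in Gamma}, written out: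
  sum over all choices e_gamma with product e of prod_gamma Q gamma e_gamma.\<close>
definition conv_family :: "nat \<Rightarrow> 'i set \<Rightarrow> ('i \<Rightarrow> pauli \<Rightarrow> real) \<Rightarrow> pauli \<Rightarrow> real" where
  "conv_family n \<Gamma> Q e =
     (\<Sum>f\<in>PiE \<Gamma> (\<lambda>_. paulis n). if pprod \<Gamma> f = e then (\<Prod>\<gamma>\<in>\<Gamma>. Q \<gamma> (f \<gamma>)) else 0)"

definition logical_channel :: "pauli set \<Rightarrow> (pauli \<Rightarrow> real) \<Rightarrow> pauli \<Rightarrow> real" where
  "logical_channel G P e = (1 / real (card G)) * (\<Sum>g\<in>G. P (pmult e g))"

definition syndrome_stats :: "nat \<Rightarrow> (pauli \<Rightarrow> real) \<Rightarrow> pauli \<Rightarrow> real" where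
  "syndrome_stats n P s = (\<Sum>e\<in>paulis n. comm n s e * P e)"

definition local_family :: "nat \<Rightarrow> nat set set \<Rightarrow> (nat set \<Rightarrow> pauli \<Rightarrow> real) \<Rightarrow> bool" where
  "local_family n \<Gamma> Q \<longleftrightarrow> (\<forall>\<gamma>\<in>\<Gamma>. prob_dist n (Q \<gamma>)
       \<and> (\<forall>e. \<not> psupp e \<subseteq> \<gamma> \<longrightarrow> Q \<gamma> e = 0) \<and> Q \<gamma> pI > 1/2)"

end

theory Submission
  imports Defs
begin


lemma card_xor:
  assumes "finite U"
  shows "card {i\<in>U. P i \<noteq> R i} + 2 * card {i\<in>U. P i \<and> R i} = card {i\<in>U. P i} + card {i\<in>U. R i}"
proof -
  have fin: "\<And>Q. finite {i\<in>U. Q i}" using assms by auto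
  have 1: "{i\<in>U. P i} = {i\<in>U. P i \<and> \<not> R i} \<union> {i\<in>U. P i \<and> R i}" by auto
  have 2: "{i\<in>U. R i} = {i\<in>U. \<not> P i \<and> R i} \<union> {i\<in>U. P i \<and> R i}" by auto
  have 3: "{i\<in>U. P i \<noteq> R i} = {i\<in>U. P i \<and> \<not> R i} \<union> {i\<in>U. \<not> P i \<and> R i}" by auto
  have c1: "card {i\<in>U. P i} = card {i\<in>U. P i \<and> \<not> R i} + card {i\<in>U. P i \<and> R i}"
    unfolding 1 by (rule card_Un_disjoint) (auto simp: fin)
  have c2: "card {i\<in>U. R i} = card {i\<in>U. \<not> P i \<and> R i} + card {i\<in>U. P i \<and> R i}"
    unfolding 2 by (rule card_Un_disjoint) (auto simp: fin)
  have c3: "card {i\<in>U. P i \<noteq> R i} = card {i\<in>U. P i \<and> \<not> R i} + card {i\<in>U. \<not> P i \<and> R i}"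
    unfolding 3 by (rule card_Un_disjoint) (auto simp: fin)
  show ?thesis using c1 c2 c3 by linarith
qed

lemma neg1_pow_xor:
  assumes "finite U"
  shows "((-1::real) ^ card {i\<in>U. P i \<noteq> R i}) = (-1) ^ card {i\<in>U. P i} * (-1) ^ card {i\<in>U. R i}"
proof -
  have "((-1::real) ^ card {i\<in>U. P i \<noteq> R i}) = (-1) ^ (card {i\<in>U. P i \<noteq> R i} + 2 * card {i\<in>U. P i \<and> R i})"
    by (simp add: power_add power_mult)
  also have "\<dots> = (-1) ^ (card {i\<in>U. P i} + card {i\<in>U. R i})" using card_xor[OF assms] by metis
  finally show ?thesis by (simp add: power_add)
qed

definition cpred :: "pauli \<Rightarrow> pauli \<Rightarrow> nat \<Rightarrow> bool" where
  "cpred a e i = ((fst (a i) \<and> snd (e i)) \<noteq> (snd (a i) \<and> fst (e i)))"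

lemma comm_alt: "comm n a e = (-1) ^ card {i\<in>{..<n}. cpred a e i}"
  by (simp add: comm_def cpred_def)


lemma comm_sym': "comm n a e = comm n e a"
proof -
  have "{i. i < n \<and> ((fst (a i) \<and> snd (e i)) \<noteq> (snd (a i) \<and> fst (e i)))} =
        {i. i < n \<and> ((fst (e i) \<and> snd (a i)) \<noteq> (snd (e i) \<and> fst (a i)))}" by auto
  then show ?thesis by (simp add: comm_def)
qed

lemma comm_mult2: "comm n a (pmult e f) = comm n a e * comm n a f"
proof -
  have eq: "{i\<in>{..<n}. cpred a (pmult e f) i} = {i\<in>{..<n}. cpred a e i \<noteq> cpred a f i}"
    by (auto simp: cpred_def pmult_def)
  have "comm n a (pmult e f) = (-1) ^ card {i\<in>{..<n}. cpred a e i \<noteq> cpred a f i}"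
    by (simp only: comm_alt eq)
  also have "\<dots> = (-1) ^ card {i\<in>{..<n}. cpred a e i} * (-1) ^ card {i\<in>{..<n}. cpred a f i}"
    by (rule neg1_pow_xor) simp
  also have "\<dots> = comm n a e * comm n a f" by (simp only: comm_alt)
  finally show ?thesis .
qed

lemma comm_mult1: "comm n (pmult e f) a = comm n e a * comm n f a"
  using comm_mult2 comm_sym' by metis

lemma comm_pm1: "comm n a e = 1 \<or> comm n a e = -1"
  by (simp add: comm_def)

lemma comm_sq: "comm n a e * comm n a e = 1"
  by (simp add: comm_def)

lemma comm_pI: "comm n a pI = 1"
  by (simp add: comm_def pI_def)

lemma comm_pI1: "comm n pI a = 1"
  by (simp add: comm_def pI_def)

lemma pmult_paulis: "a \<in> paulis n \<Longrightarrow> b \<in> paulis n \<Longrightarrow> pmult a b \<in> paulis n"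
  by (auto simp: paulis_def pmult_def)

lemma pmult_self: "pmult a a = pI"
  by (simp add: pmult_def pI_def)

lemma pmult_assoc: "pmult (pmult a b) c = pmult a (pmult b c)"
  by (auto simp: pmult_def)

lemma pmult_comm: "pmult a b = pmult b a"
  by (auto simp: pmult_def)

lemma pmult_cancel: "pmult a (pmult a b) = b"
  by (auto simp: pmult_def fun_eq_iff prod_eq_iff)

lemma pmult_pI: "pmult pI a = a"
  by (auto simp: pmult_def pI_def)

lemma pmult_eq_pI: "pmult a b = pI \<longleftrightarrow> a = b"
  by (auto simp: pmult_def pI_def fun_eq_iff prod_eq_iff)

lemma finite_paulis: "finite (paulis n)"
proof -
  have "paulis n \<subseteq> (\<lambda>f i. if i < n then f i else (False, False)) ` (PiE {..<n} (\<lambda>_. UNIV))"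
  proof
    fix a assume a: "a \<in> paulis n"
    let ?f = "restrict a {..<n}"
    have "?f \<in> PiE {..<n} (\<lambda>_. UNIV)" by simp
    moreover have "a = (\<lambda>i. if i < n then ?f i else (False, False))"
      using a by (auto simp: paulis_def fun_eq_iff)
    ultimately show "a \<in> (\<lambda>f i. if i < n then f i else (False, False)) ` (PiE {..<n} (\<lambda>_. UNIV))"
      by blast
  qed
  moreover have "finite (PiE {..<n} (\<lambda>_. UNIV :: (bool \<times> bool) set))"
    by (rule finite_PiE) auto
  ultimately show ?thesis by (meson finite_imageI finite_subset)
qed

lemma pI_paulis: "pI \<in> paulis n"
  by (simp add: paulis_def pI_def)

lemma comm_local:
  assumes "\<forall>i\<in>psupp e. a i = b i"
  shows "comm n a e = comm n b e"
proof -
  have "cpred a e i = cpred b e i" for i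
  proof (cases "i \<in> psupp e")
    case True then show ?thesis using assms by (simp add: cpred_def)
  next
    case False then have "e i = (False, False)" by (simp add: psupp_def)
    then show ?thesis by (simp add: cpred_def)
  qed
  then show ?thesis by (simp add: comm_alt)
qed



lemma single_anti:
  assumes "i < n" "x i \<noteq> (False, False)"
  shows "\<exists>y\<in>paulis n. comm n y x = -1 \<and> (\<forall>j. j \<noteq> i \<longrightarrow> y j = (False, False))"
proof -
  define y where "y = (\<lambda>j. if j = i then (if fst (x i) then (False, True) else (True, False)) else (False, False))"
  have yp: "y \<in> paulis n" using assms by (auto simp: y_def paulis_def)
  have "{j\<in>{..<n}. cpred y x j} = {i}"
    using assms by (auto simp: y_def cpred_def prod_eq_iff split: if_splits)
  then have "comm n y x = -1" by (simp add: comm_alt)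
  then show ?thesis using yp by (auto simp: y_def)
qed

lemma sum_shift:
  assumes "y \<in> paulis n"
  shows "(\<Sum>b\<in>paulis n. g b) = (\<Sum>b\<in>paulis n. g (pmult y b))"
  by (rule sum.reindex_bij_witness[of _ "pmult y" "pmult y"])
     (auto simp: pmult_cancel pmult_paulis assms)

lemma char_sum_sub:
  assumes H: "H \<subseteq> paulis n" and cl: "\<forall>a\<in>H. \<forall>b\<in>H. pmult a b \<in> H" and y: "y \<in> paulis n"
  shows "(\<Sum>h\<in>H. comm n y h) = (if y \<in> perp n H then real (card H) else 0)"
proof (cases "y \<in> perp n H")
  case True
  then have "(\<Sum>h\<in>H. comm n y h) = (\<Sum>h\<in>H. 1)" by (auto simp: perp_def)
  then show ?thesis using True by simp
next
  case False
  then obtain h0 where h0: "h0 \<in> H" "comm n y h0 \<noteq> 1" using y by (auto simp: perp_def)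
  then have m: "comm n y h0 = -1" using comm_pm1 by blast
  have "(\<Sum>h\<in>H. comm n y h) = (\<Sum>h\<in>H. comm n y (pmult h0 h))"
    by (rule sum.reindex_bij_witness[of _ "pmult h0" "pmult h0"])
       (auto simp: pmult_cancel cl h0)
  also have "\<dots> = - (\<Sum>h\<in>H. comm n y h)"
    by (simp add: comm_mult2 m sum_negf)
  finally show ?thesis using False by simp
qed

lemma perp_paulis_iff:
  assumes "x \<in> paulis n"
  shows "x \<in> perp n (paulis n) \<longleftrightarrow> x = pI"
proof
  assume xp: "x \<in> perp n (paulis n)"
  show "x = pI"
  proof (rule ccontr)
    assume "x \<noteq> pI"
    then obtain i where i: "x i \<noteq> (False, False)" by (auto simp: pI_def fun_eq_iff)
    then have "i < n" using assms by (auto simp: paulis_def) (meson not_le)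
    then obtain y where "y \<in> paulis n" "comm n y x = -1" using single_anti i by blast
    then show False using xp comm_sym'[of n x y] by (auto simp: perp_def)
  qed
next
  assume "x = pI" then show "x \<in> perp n (paulis n)" using assms by (simp add: perp_def comm_pI1)
qed

lemma paulis_closed: "\<forall>a\<in>paulis n. \<forall>b\<in>paulis n. pmult a b \<in> paulis n"
  by (simp add: pmult_paulis)

lemma char_sum_full:
  assumes "x \<in> paulis n"
  shows "(\<Sum>a\<in>paulis n. comm n a x) = (if x = pI then real (card (paulis n)) else 0)"
proof -
  have "(\<Sum>a\<in>paulis n. comm n a x) = (\<Sum>a\<in>paulis n. comm n x a)"
    using comm_sym' by metis
  also have "\<dots> = (if x \<in> perp n (paulis n) then real (card (paulis n)) else 0)"
    by (rule char_sum_sub[OF _ paulis_closed assms]) simp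
  finally show ?thesis using perp_paulis_iff[OF assms] by simp
qed

lemma fourier_inv:
  assumes x: "x \<in> paulis n"
  shows "(\<Sum>c\<in>paulis n. (\<Sum>b\<in>paulis n. h b * comm n b c) * comm n x c) = real (card (paulis n)) * h x"
proof -
  have "(\<Sum>c\<in>paulis n. (\<Sum>b\<in>paulis n. h b * comm n b c) * comm n x c)
      = (\<Sum>c\<in>paulis n. \<Sum>b\<in>paulis n. h b * comm n c (pmult b x))"
    by (simp add: sum_distrib_right comm_mult2 comm_sym' mult.assoc)
  also have "\<dots> = (\<Sum>b\<in>paulis n. h b * (\<Sum>c\<in>paulis n. comm n c (pmult b x)))"
    by (subst sum.swap) (simp add: sum_distrib_left)
  also have "\<dots> = (\<Sum>b\<in>paulis n. if b = x then h b * real (card (paulis n)) else 0)"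
    by (rule sum.cong) (auto simp: char_sum_full pmult_paulis x pmult_eq_pI)
  also have "\<dots> = real (card (paulis n)) * h x" using x finite_paulis by simp
  finally show ?thesis .
qed

lemma fourier_local_zero:
  assumes loc: "\<And>a b. (\<forall>i\<in>\<gamma>. a i = b i) \<Longrightarrow> h a = h b"
    and c: "c \<in> paulis n" and ns: "\<not> psupp c \<subseteq> \<gamma>"
  shows "(\<Sum>b\<in>paulis n. h b * comm n b c) = 0"
proof -
  obtain i where i: "i \<in> psupp c" "i \<notin> \<gamma>" using ns by blast
  then have ci: "c i \<noteq> (False, False)" by (simp add: psupp_def)
  then have "i < n" using c by (auto simp: paulis_def) (meson not_le)
  then obtain y where y: "y \<in> paulis n" "comm n y c = -1" "\<forall>j. j \<noteq> i \<longrightarrow> y j = (False, False)"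
    using single_anti ci by blast
  have hy: "h (pmult y b) = h b" for b
    by (rule loc) (use i y in \<open>auto simp: pmult_def\<close>)
  have "(\<Sum>b\<in>paulis n. h b * comm n b c) = (\<Sum>b\<in>paulis n. h (pmult y b) * comm n (pmult y b) c)"
    by (rule sum_shift[OF y(1)])
  also have "\<dots> = - (\<Sum>b\<in>paulis n. h b * comm n b c)"
    by (simp add: hy comm_mult1 y(2) sum_negf)
  finally show ?thesis by simp
qed



lemma pprod_empty: "pprod {} f = pI"
  by (simp add: pprod_def pI_def)

lemma odd_card_insert:
  assumes "finite A" "x \<notin> A"
  shows "odd (card {k\<in>insert x A. P k}) = (P x \<noteq> odd (card {k\<in>A. P k}))"
proof (cases "P x")
  case True
  then have "{k\<in>insert x A. P k} = insert x {k\<in>A. P k}" by auto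
  then show ?thesis using assms True by simp
next
  case False
  then have "{k\<in>insert x A. P k} = {k\<in>A. P k}" by auto
  then show ?thesis using False by simp
qed

lemma pprod_insert:
  assumes "finite A" "x \<notin> A"
  shows "pprod (insert x A) f = pmult (f x) (pprod A f)"
  unfolding pprod_def pmult_def
  by (rule ext, simp only: odd_card_insert[OF assms], simp)

lemma comm_pprod:
  assumes "finite A"
  shows "comm n a (pprod A f) = (\<Prod>k\<in>A. comm n a (f k))"
  using assms
  by (induction A rule: finite_induct) (simp_all add: pprod_empty comm_pI pprod_insert comm_mult2)

lemma pprod_paulis:
  assumes "\<forall>k\<in>A. f k \<in> paulis n"
  shows "pprod A f \<in> paulis n"
proof -
  have z: "\<And>i k. i \<ge> n \<Longrightarrow> k \<in> A \<Longrightarrow> f k i = (False, False)" using assms by (auto simp: paulis_def)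
  have "{k\<in>A. fst (f k i)} = {} \<and> {k\<in>A. snd (f k i)} = {}" if "i \<ge> n" for i
    using z[OF that] by auto
  then show ?thesis unfolding pprod_def paulis_def
  proof (intro CollectI allI impI)
    fix i assume "n \<le> i"
    then have e1: "{k\<in>A. fst (f k i)} = {}" and e2: "{k\<in>A. snd (f k i)} = {}" using z by auto
    show "(odd (card {k\<in>A. fst (f k i)}), odd (card {k\<in>A. snd (f k i)})) = (False, False)"
      unfolding e1 e2 by simp
  qed
qed

lemma conv_supp:
  assumes "e \<notin> paulis n"
  shows "conv_family n \<Gamma> Q e = 0"
proof -
  have "\<And>f. f \<in> PiE \<Gamma> (\<lambda>_. paulis n) \<Longrightarrow> pprod \<Gamma> f \<noteq> e"
    using pprod_paulis assms by (metis PiE_mem)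
  then show ?thesis by (simp add: conv_family_def)
qed

lemma conv_transform:
  assumes fin: "finite \<Gamma>"
  shows "syndrome_stats n (conv_family n \<Gamma> Q) a = (\<Prod>\<gamma>\<in>\<Gamma>. syndrome_stats n (Q \<gamma>) a)"
proof -
  let ?Pi = "PiE \<Gamma> (\<lambda>_. paulis n)"
  have finPi: "finite ?Pi" using fin finite_paulis by (simp add: finite_PiE)
  have "syndrome_stats n (conv_family n \<Gamma> Q) a
      = (\<Sum>e\<in>paulis n. \<Sum>f\<in>?Pi. if pprod \<Gamma> f = e then comm n a e * (\<Prod>\<gamma>\<in>\<Gamma>. Q \<gamma> (f \<gamma>)) else 0)"
    unfolding syndrome_stats_def conv_family_def
    by (simp add: sum_distrib_left if_distrib cong: if_cong)
  also have "\<dots> = (\<Sum>f\<in>?Pi. \<Sum>e\<in>paulis n. if pprod \<Gamma> f = e then comm n a e * (\<Prod>\<gamma>\<in>\<Gamma>. Q \<gamma> (f \<gamma>)) else 0)"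
    by (rule sum.swap)
  also have "\<dots> = (\<Sum>f\<in>?Pi. comm n a (pprod \<Gamma> f) * (\<Prod>\<gamma>\<in>\<Gamma>. Q \<gamma> (f \<gamma>)))"
  proof (rule sum.cong[OF refl])
    fix f assume "f \<in> ?Pi"
    then have "pprod \<Gamma> f \<in> paulis n" using pprod_paulis by (metis PiE_mem)
    then show "(\<Sum>e\<in>paulis n. if pprod \<Gamma> f = e then comm n a e * (\<Prod>\<gamma>\<in>\<Gamma>. Q \<gamma> (f \<gamma>)) else 0)
        = comm n a (pprod \<Gamma> f) * (\<Prod>\<gamma>\<in>\<Gamma>. Q \<gamma> (f \<gamma>))"
      using finite_paulis by (simp add: sum.delta)
  qed
  also have "\<dots> = (\<Sum>f\<in>?Pi. \<Prod>\<gamma>\<in>\<Gamma>. comm n a (f \<gamma>) * Q \<gamma> (f \<gamma>))"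
    by (simp add: comm_pprod fin prod.distrib)
  also have "\<dots> = (\<Prod>\<gamma>\<in>\<Gamma>. \<Sum>e\<in>paulis n. comm n a e * Q \<gamma> e)"
    by (rule prod_sum_PiE[symmetric]) (auto simp: fin finite_paulis)
  finally show ?thesis by (simp add: syndrome_stats_def)
qed

lemma stats_pos:
  assumes pd: "prob_dist n p" and half: "p pI > 1/2"
  shows "syndrome_stats n p a > 0"
proof -
  have nn: "\<And>e. p e \<ge> 0" and s1: "(\<Sum>e\<in>paulis n. p e) = 1" using pd by (auto simp: prob_dist_def)
  have fin: "finite (paulis n)" by (rule finite_paulis)
  have rem: "\<And>g. (\<Sum>e\<in>paulis n. g e) = g pI + (\<Sum>e\<in>paulis n - {pI}. g e)"
    using sum.remove[OF fin pI_paulis] by blast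
  have "(\<Sum>e\<in>paulis n - {pI}. - p e) \<le> (\<Sum>e\<in>paulis n - {pI}. comm n a e * p e)"
  proof (rule sum_mono)
    fix e
    have "comm n a e = 1 \<or> comm n a e = -1" by (rule comm_pm1)
    then show "- p e \<le> comm n a e * p e" using nn[of e] by auto
  qed
  moreover have "(\<Sum>e\<in>paulis n - {pI}. p e) = 1 - p pI" using rem[of p] s1 by simp
  ultimately have "syndrome_stats n p a \<ge> p pI - (1 - p pI)"
    unfolding syndrome_stats_def using rem[of "\<lambda>e. comm n a e * p e"]
    by (simp add: comm_pI sum_negf)
  then show ?thesis using half by simp
qed

lemma channel_formula:
  assumes supp: "\<And>x. x \<notin> paulis n \<Longrightarrow> P x = 0"
    and G: "pauli_subgroup n G" and e: "e \<in> paulis n"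
  shows "logical_channel G P e
      = (1 / real (card (paulis n))) * (\<Sum>c\<in>paulis n. if c \<in> perp n G then syndrome_stats n P c * comm n c e else 0)"
proof -
  let ?K = "real (card (paulis n))"
  have GP: "G \<subseteq> paulis n" and cl: "\<forall>a\<in>G. \<forall>b\<in>G. pmult a b \<in> G" and pIG: "pI \<in> G"
    using G by (auto simp: pauli_subgroup_def)
  have finG: "finite G" using GP finite_paulis finite_subset by blast
  have cG: "card G > 0" using finG pIG card_gt_0_iff by blast
  have Kp: "?K > 0" using finite_paulis pI_paulis card_gt_0_iff by (metis of_nat_0_less_iff empty_iff)
  have inv: "?K * P x = (\<Sum>c\<in>paulis n. syndrome_stats n P c * comm n c x)" if x: "x \<in> paulis n" for x
  proof -
    have "?K * P x = (\<Sum>c\<in>paulis n. (\<Sum>b\<in>paulis n. P b * comm n b c) * comm n x c)"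
      using fourier_inv[OF x, of P] by simp
    also have "\<dots> = (\<Sum>c\<in>paulis n. syndrome_stats n P c * comm n c x)"
      unfolding syndrome_stats_def
    proof (intro sum.cong refl)
      fix c
      have "(\<Sum>b\<in>paulis n. P b * comm n b c) = (\<Sum>e\<in>paulis n. comm n c e * P e)"
        by (intro sum.cong refl) (simp add: comm_sym'[of n _ c])
      then show "(\<Sum>b\<in>paulis n. P b * comm n b c) * comm n x c = (\<Sum>e\<in>paulis n. comm n c e * P e) * comm n c x"
        by (simp add: comm_sym'[of n x c])
    qed
    finally show ?thesis .
  qed
  have "?K * (\<Sum>g\<in>G. P (pmult e g)) = (\<Sum>g\<in>G. \<Sum>c\<in>paulis n. syndrome_stats n P c * comm n c (pmult e g))"
    by (simp add: sum_distrib_left) (rule sum.cong, auto intro!: inv pmult_paulis e dest: subsetD[OF GP])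
  also have "\<dots> = (\<Sum>c\<in>paulis n. syndrome_stats n P c * comm n c e * (\<Sum>g\<in>G. comm n c g))"
    by (subst sum.swap) (simp add: comm_mult2 sum_distrib_left mult.assoc)
  also have "\<dots> = (\<Sum>c\<in>paulis n. if c \<in> perp n G then syndrome_stats n P c * comm n c e * real (card G) else 0)"
    by (rule sum.cong) (auto simp: char_sum_sub[OF GP cl])
  also have "\<dots> = real (card G) * (\<Sum>c\<in>paulis n. if c \<in> perp n G then syndrome_stats n P c * comm n c e else 0)"
    by (simp add: sum_distrib_left if_distrib mult.commute cong: if_cong)
  finally have "?K * (\<Sum>g\<in>G. P (pmult e g)) = real (card G) * (\<Sum>c\<in>paulis n. if c \<in> perp n G then syndrome_stats n P c * comm n c e else 0)" .
  then show ?thesis unfolding logical_channel_def using cG Kp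
    by (simp add: field_simps)
qed



lemma perp_closed:
  assumes "a \<in> perp n B" "b \<in> perp n B"
  shows "pmult a b \<in> perp n B"
  using assms by (auto simp: perp_def comm_mult1 pmult_paulis)

lemma count_shift:
  assumes c: "c \<in> paulis n" and D: "D \<subseteq> paulis n"
  shows "(\<Sum>x\<in>paulis n. if pmult c x \<in> D then v else 0) = real (card D) * v"
proof -
  have "(\<Sum>x\<in>paulis n. if pmult c x \<in> D then v else 0) = (\<Sum>x\<in>paulis n. if x \<in> D then v else 0)"
    using sum_shift[OF c, of "\<lambda>x. if x \<in> D then v else 0"] by simp
  also have "\<dots> = (\<Sum>x\<in>paulis n \<inter> D. v)"
    by (rule sum.inter_restrict[OF finite_paulis, symmetric])
  also have "\<dots> = real (card (paulis n \<inter> D)) * v" by simp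
  also have "paulis n \<inter> D = D" using D by blast
  finally show ?thesis .
qed

lemma key:
  fixes h :: "nat set \<Rightarrow> pauli \<Rightarrow> real"
  assumes G: "pauli_subgroup n G"
    and fin: "finite \<Gamma>" and Gam: "\<Gamma> \<subseteq> Pow {..<n}"
    and dist: "\<forall>\<gamma>\<in>\<Gamma>. enat (2 * card \<gamma> + 1) \<le> code_distance n G"
    and loc: "\<And>\<gamma> a b. \<gamma> \<in> \<Gamma> \<Longrightarrow> (\<forall>i\<in>\<gamma>. a i = b i) \<Longrightarrow> h \<gamma> a = h \<gamma> b"
    and stab: "\<forall>s\<in>stabilizer n G. (\<Sum>\<gamma>\<in>\<Gamma>. h \<gamma> s) = 0"
    and a: "a \<in> perp n G"
  shows "(\<Sum>\<gamma>\<in>\<Gamma>. h \<gamma> a) = 0"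
proof -
  define L where "L = (\<lambda>x. \<Sum>\<gamma>\<in>\<Gamma>. h \<gamma> x)"
  define K where "K = real (card (paulis n))"
  define \<beta> where "\<beta> = (\<lambda>c. \<Sum>b\<in>paulis n. L b * comm n b c)"
  define S where "S = stabilizer n G"
  define D where "D = perp n S"
  have GP: "G \<subseteq> paulis n" and Gcl: "\<forall>a\<in>G. \<forall>b\<in>G. pmult a b \<in> G" and pIG: "pI \<in> G"
    using G by (auto simp: pauli_subgroup_def)
  have Kp: "K > 0" unfolding K_def
    using finite_paulis pI_paulis card_gt_0_iff by (metis of_nat_0_less_iff empty_iff)
  have ap: "a \<in> paulis n" using a by (simp add: perp_def)
  have supp: "\<exists>\<gamma>\<in>\<Gamma>. psupp c \<subseteq> \<gamma>" if c: "c \<in> paulis n" and nz: "\<beta> c \<noteq> 0" for c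
  proof (rule ccontr)
    assume no: "\<not> (\<exists>\<gamma>\<in>\<Gamma>. psupp c \<subseteq> \<gamma>)"
    have "\<beta> c = (\<Sum>\<gamma>\<in>\<Gamma>. \<Sum>b\<in>paulis n. h \<gamma> b * comm n b c)"
      unfolding \<beta>_def L_def by (simp add: sum_distrib_right) (rule sum.swap)
    also have "\<dots> = 0"
      by (rule sum.neutral) (use no in \<open>auto intro!: fourier_local_zero[OF _ c] loc\<close>)
    finally show False using nz by simp
  qed
  have inv: "K * L x = (\<Sum>c\<in>paulis n. \<beta> c * comm n x c)" if "x \<in> paulis n" for x
    using fourier_inv[OF that, of L] unfolding K_def \<beta>_def by simp
  have SP: "S \<subseteq> paulis n" unfolding S_def stabilizer_def perp_def by auto
  have Scl: "\<forall>x\<in>S. \<forall>y\<in>S. pmult x y \<in> S"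
    unfolding S_def stabilizer_def using perp_closed Gcl by blast
  have pIS: "pI \<in> S" unfolding S_def stabilizer_def perp_def using pIG pI_paulis comm_pI1 by auto
  have finS: "finite S" using SP finite_paulis finite_subset by blast
  have cS: "card S > 0" using finS pIS card_gt_0_iff by blast
  have DP: "D \<subseteq> paulis n" unfolding D_def perp_def by auto
  have pID: "pI \<in> D" unfolding D_def perp_def using pI_paulis comm_pI1 by auto
  have finD: "finite D" using DP finite_paulis finite_subset by blast
  have cD: "card D > 0" using finD pID card_gt_0_iff by blast
  have coset0: "(\<Sum>c\<in>paulis n. if pmult c x \<in> D then \<beta> c else 0) = 0" if x: "x \<in> paulis n" for x
  proof -
    have "0 = K * (\<Sum>s\<in>S. L s * comm n s x)"
      using stab by (simp add: L_def S_def)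
    also have "\<dots> = (\<Sum>s\<in>S. (K * L s) * comm n s x)" by (simp add: sum_distrib_left mult.assoc)
    also have "\<dots> = (\<Sum>s\<in>S. \<Sum>c\<in>paulis n. \<beta> c * comm n (pmult c x) s)"
    proof (rule sum.cong[OF refl])
      fix s assume "s \<in> S"
      then have sp: "s \<in> paulis n" using SP by blast
      have "(K * L s) * comm n s x = (\<Sum>c\<in>paulis n. \<beta> c * comm n s c * comm n s x)"
        by (simp add: inv[OF sp] sum_distrib_right)
      also have "\<dots> = (\<Sum>c\<in>paulis n. \<beta> c * comm n (pmult c x) s)"
        by (intro sum.cong refl) (simp add: comm_mult1 comm_sym'[of n s] mult.assoc)
      finally show "(K * L s) * comm n s x = (\<Sum>c\<in>paulis n. \<beta> c * comm n (pmult c x) s)" .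
    qed
    also have "\<dots> = (\<Sum>c\<in>paulis n. \<beta> c * (\<Sum>s\<in>S. comm n (pmult c x) s))"
      by (subst sum.swap) (simp add: sum_distrib_left)
    also have "\<dots> = (\<Sum>c\<in>paulis n. real (card S) * (if pmult c x \<in> D then \<beta> c else 0))"
      by (intro sum.cong refl) (simp add: char_sum_sub[OF SP Scl] pmult_paulis x D_def)
    also have "\<dots> = real (card S) * (\<Sum>c\<in>paulis n. if pmult c x \<in> D then \<beta> c else 0)"
      by (simp add: sum_distrib_left)
    finally show ?thesis using cS by simp
  qed
  have cons: "comm n a c = comm n a c'"
    if c: "c \<in> paulis n" and c': "c' \<in> paulis n" and nz: "\<beta> c \<noteq> 0" and nz': "\<beta> c' \<noteq> 0"
      and x: "x \<in> paulis n" and cx: "pmult c x \<in> D" and cx': "pmult c' x \<in> D" for c c' x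
  proof -
    obtain \<gamma> where g: "\<gamma> \<in> \<Gamma>" "psupp c \<subseteq> \<gamma>" using supp[OF c nz] by blast
    obtain \<gamma>' where g': "\<gamma>' \<in> \<Gamma>" "psupp c' \<subseteq> \<gamma>'" using supp[OF c' nz'] by blast
    have fg: "finite \<gamma>" "finite \<gamma>'" using g(1) g'(1) Gam finite_subset by (auto intro: finite_subset[of _ "{..<n}"])
    have eq: "pmult c c' = pmult (pmult c x) (pmult c' x)"
      by (simp add: pmult_assoc pmult_comm pmult_cancel) (metis pmult_assoc pmult_comm pmult_cancel)
    have inD: "pmult c c' \<in> D" unfolding eq D_def using perp_closed cx cx' D_def by blast
    have ps: "psupp (pmult c c') \<subseteq> psupp c \<union> psupp c'"
    proof
      fix i assume i: "i \<in> psupp (pmult c c')"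
      show "i \<in> psupp c \<union> psupp c'"
      proof (rule ccontr)
        assume "i \<notin> psupp c \<union> psupp c'"
        then have "c i = (False, False)" "c' i = (False, False)" by (auto simp: psupp_def)
        then show False using i by (simp add: psupp_def pmult_def)
      qed
    qed
    have "psupp (pmult c c') \<subseteq> \<gamma> \<union> \<gamma>'" using ps g(2) g'(2) by blast
    then have "pweight (pmult c c') \<le> card (\<gamma> \<union> \<gamma>')"
      unfolding pweight_def using fg by (simp add: card_mono)
    also have "\<dots> \<le> card \<gamma> + card \<gamma>'" by (rule card_Un_le)
    finally have w: "pweight (pmult c c') \<le> card \<gamma> + card \<gamma>'" .
    have inG: "pmult c c' \<in> G"
    proof (rule ccontr)
      assume "pmult c c' \<notin> G"
      then have "pmult c c' \<in> dressed n G - G" using inD by (simp add: dressed_def D_def S_def)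
      then have "code_distance n G \<le> enat (pweight (pmult c c'))"
        unfolding code_distance_def by (rule INF_lower)
      then have "enat (2 * card \<gamma> + 1) \<le> enat (pweight (pmult c c'))"
        "enat (2 * card \<gamma>' + 1) \<le> enat (pweight (pmult c c'))"
        using dist g(1) g'(1) order_trans by blast+
      then show False using w by simp
    qed
    then have "comm n a (pmult c c') = 1" using a by (simp add: perp_def)
    then have "comm n a c * comm n a c' = 1" by (simp add: comm_mult2)
    then show ?thesis using comm_pm1[of n a c] comm_pm1[of n a c'] by auto
  qed
  define \<phi> where "\<phi> = (\<lambda>x. if \<exists>c. c \<in> paulis n \<and> \<beta> c \<noteq> 0 \<and> pmult c x \<in> D
                    then comm n a (SOME c. c \<in> paulis n \<and> \<beta> c \<noteq> 0 \<and> pmult c x \<in> D) else 0)"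
  have phi: "\<beta> c * comm n a c = \<beta> c * \<phi> x"
    if c: "c \<in> paulis n" and x: "x \<in> paulis n" and cx: "pmult c x \<in> D" for c x
  proof (cases "\<beta> c = 0")
    case True then show ?thesis by simp
  next
    case False
    then have ex: "\<exists>c. c \<in> paulis n \<and> \<beta> c \<noteq> 0 \<and> pmult c x \<in> D" using c cx by blast
    define c' where "c' = (SOME c. c \<in> paulis n \<and> \<beta> c \<noteq> 0 \<and> pmult c x \<in> D)"
    have c': "c' \<in> paulis n \<and> \<beta> c' \<noteq> 0 \<and> pmult c' x \<in> D"
      unfolding c'_def using someI_ex[OF ex] .
    have "\<phi> x = comm n a c'" unfolding \<phi>_def c'_def using ex by simp
    then show ?thesis using cons[OF c _ False _ x cx] c' by simp
  qed
  have "real (card D) * (\<Sum>c\<in>paulis n. \<beta> c * comm n a c)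
      = (\<Sum>c\<in>paulis n. \<Sum>x\<in>paulis n. if pmult c x \<in> D then \<beta> c * comm n a c else 0)"
    by (simp add: sum_distrib_left count_shift[OF _ DP])
  also have "\<dots> = (\<Sum>c\<in>paulis n. \<Sum>x\<in>paulis n. \<phi> x * (if pmult c x \<in> D then \<beta> c else 0))"
    by (intro sum.cong refl) (auto simp: phi mult.commute)
  also have "\<dots> = (\<Sum>x\<in>paulis n. \<phi> x * (\<Sum>c\<in>paulis n. if pmult c x \<in> D then \<beta> c else 0))"
    by (subst sum.swap) (simp add: sum_distrib_left)
  also have "\<dots> = 0" by (simp add: coset0)
  finally have "(\<Sum>c\<in>paulis n. \<beta> c * comm n a c) = 0" using cD by simp
  then have "K * L a = 0" using inv[OF ap] by simp
  then show ?thesis using Kp by (simp add: L_def)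
qed



lemma stats_local:
  assumes "\<forall>e. \<not> psupp e \<subseteq> \<gamma> \<longrightarrow> p e = 0" and "\<forall>i\<in>\<gamma>. a i = b i"
  shows "syndrome_stats n p a = syndrome_stats n p b"
  unfolding syndrome_stats_def
proof (intro sum.cong refl)
  fix e
  show "comm n a e * p e = comm n b e * p e"
  proof (cases "psupp e \<subseteq> \<gamma>")
    case True
    then have "comm n a e = comm n b e" using assms(2) by (intro comm_local) blast
    then show ?thesis by simp
  next
    case False then show ?thesis using assms(1) by simp
  qed
qed

theorem corollary1:
  fixes n :: nat and G :: "pauli set" and \<Gamma> :: "nat set set"
    and Q Q' :: "nat set \<Rightarrow> pauli \<Rightarrow> real"
  assumes "pauli_subgroup n G"
    and "\<Gamma> \<subseteq> Pow {..<n}"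
    and "\<forall>\<gamma>\<in>\<Gamma>. enat (2 * card \<gamma> + 1) \<le> code_distance n G"
    and "local_family n \<Gamma> Q" and "local_family n \<Gamma> Q'"
    and "\<forall>s\<in>stabilizer n G. syndrome_stats n (conv_family n \<Gamma> Q) s
                          = syndrome_stats n (conv_family n \<Gamma> Q') s"
  shows "\<forall>e\<in>paulis n. logical_channel G (conv_family n \<Gamma> Q) e
                    = logical_channel G (conv_family n \<Gamma> Q') e"
proof -
  note G = assms(1) and Gam = assms(2) and dist = assms(3)
  have fin: "finite \<Gamma>" using Gam by (meson finite_Pow_iff finite_lessThan finite_subset)
  define F where "F = (\<lambda>\<gamma> a. syndrome_stats n (Q \<gamma>) a)"
  define F' where "F' = (\<lambda>\<gamma> a. syndrome_stats n (Q' \<gamma>) a)"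
  have Fp: "F \<gamma> a > 0" if "\<gamma> \<in> \<Gamma>" for \<gamma> a
    using assms(4) that unfolding F_def local_family_def by (auto intro: stats_pos)
  have F'p: "F' \<gamma> a > 0" if "\<gamma> \<in> \<Gamma>" for \<gamma> a
    using assms(5) that unfolding F'_def local_family_def by (auto intro: stats_pos)
  define h where "h = (\<lambda>\<gamma> a. ln (F \<gamma> a) - ln (F' \<gamma> a))"
  have loc: "h \<gamma> a = h \<gamma> b" if "\<gamma> \<in> \<Gamma>" "\<forall>i\<in>\<gamma>. a i = b i" for \<gamma> a b
  proof -
    have "F \<gamma> a = F \<gamma> b" unfolding F_def
      by (rule stats_local) (use assms(4) that in \<open>auto simp: local_family_def\<close>)
    moreover have "F' \<gamma> a = F' \<gamma> b" unfolding F'_def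
      by (rule stats_local) (use assms(5) that in \<open>auto simp: local_family_def\<close>)
    ultimately show ?thesis by (simp add: h_def)
  qed
  have sumh: "(\<Sum>\<gamma>\<in>\<Gamma>. h \<gamma> a) = ln (syndrome_stats n (conv_family n \<Gamma> Q) a) - ln (syndrome_stats n (conv_family n \<Gamma> Q') a)" for a
  proof -
    have "(\<Sum>\<gamma>\<in>\<Gamma>. h \<gamma> a) = (\<Sum>\<gamma>\<in>\<Gamma>. ln (F \<gamma> a)) - (\<Sum>\<gamma>\<in>\<Gamma>. ln (F' \<gamma> a))"
      by (simp add: h_def sum_subtractf)
    also have "\<dots> = ln (\<Prod>\<gamma>\<in>\<Gamma>. F \<gamma> a) - ln (\<Prod>\<gamma>\<in>\<Gamma>. F' \<gamma> a)"
      using fin Fp F'p by (simp add: ln_prod less_imp_neq[symmetric])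
    finally show ?thesis by (simp add: conv_transform[OF fin] F_def F'_def)
  qed
  have pos: "syndrome_stats n (conv_family n \<Gamma> Q) a > 0" "syndrome_stats n (conv_family n \<Gamma> Q') a > 0" for a
    using Fp F'p by (auto simp: conv_transform[OF fin] F_def F'_def intro!: prod_pos)
  have stab: "\<forall>s\<in>stabilizer n G. (\<Sum>\<gamma>\<in>\<Gamma>. h \<gamma> s) = 0"
    using assms(6) by (simp add: sumh)
  have eqF: "syndrome_stats n (conv_family n \<Gamma> Q) a = syndrome_stats n (conv_family n \<Gamma> Q') a"
    if a: "a \<in> perp n G" for a
  proof -
    have "(\<Sum>\<gamma>\<in>\<Gamma>. h \<gamma> a) = 0" by (rule key[OF G fin Gam dist loc stab a])
    then show ?thesis using sumh[of a] pos[of a] by simp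
  qed
  show ?thesis
  proof
    fix e assume e: "e \<in> paulis n"
    show "logical_channel G (conv_family n \<Gamma> Q) e = logical_channel G (conv_family n \<Gamma> Q') e"
      by (simp add: channel_formula[OF conv_supp G e] eqF cong: if_cong)
  qed
qed

end
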